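(* Let $K$ be as in the context. Let $G_1,G_2$ be connected graphs with $n_1$ and $n_2$ vertices, where $G_1$ has vertex set $\{1,\dots,n_1\}$, $G_2$ has vertex set $\{n_1,\dots,n_1+n_2-1\}$ (so the vertex $n_1$ is their only common vertex), and let $G=G_1\cup G_2$ be the graph with vertex set $\{1,\dots,n_1+n_2-1\}$ and edge set the union of the edge sets. Suppose that one of $\Lambda^K_{G_1},\Lambda^K_{G_2}$ is universally $L^p$-improving and the other has a non-trivial estimate at the common vertex $n_1$. Then $\Lambda^K_G$ is $L^p$-improving: there exist exponents $s_1,\dots,s_{n_1+n_2-1}\in[1,\infty]$ with $\sum_i 1/s_i>1$ and $C$ such that $\Lambda^K_G(f_1,\dots,f_{n_1+n_2-1})\le C\prod_i\|f_i\|_{L^{s_i}(\mathbb R^d)}$ for all nonnegative measurable $f_i$.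
   Context: Let $K:\mathbb R^d\times\mathbb R^d\to[0,\infty)$ be a nonnegative locally integrable function. For a finite graph $H$ with vertex set $V\subset\mathbb N$ (usual order) and edge set $E$, and nonnegative measurable $f_v$, $v\in V$, define $\Lambda^K_H((f_v))=\int_{(\mathbb R^d)^V}\prod_{\{i,j\}\in E,\ i<j}K(x^i,x^j)\prod_v f_v(x^v)\,dx^v$. For each vertex $i\in V$ write $\Lambda^K_H((f_v))=\int T_i((f_v)_{v\ne i})(x^i)f_i(x^i)\,dx^i$, where $T_i$ is the multilinear operator obtained by integrating out all variables except $x^i$. (i) $\Lambda^K_H$ (with $|V|=m$) has a non-trivial estimate at vertex $i$ if there exist $p_v\in[1,\infty]$, $v\in V$, with $p_i<\infty$, $\sum_v1/p_v\ge1$, and $C$ such that $\Lambda^K_H((f_v))\le C\prod_v\|f_v\|_{L^{p_v}}$ for all nonnegative measurable $f_v$. (ii) An $(m-1)$-linear operator $U$ is universally $L^p$-improving if for every $r\in(1,\infty)$ there exist $p_1,\dots,p_{m-1}\in[1,\infty]$ with $\sum_j1/p_j>1/r$ and $C$ such that $\|U(g_1,\dots,g_{m-1})\|_{L^r(\mathbb R^d)}\le C\prod_j\|g_j\|_{L^{p_j}(\mathbb R^d)}$; the form $\Lambda^K_H$ is universally $L^p$-improving if every $T_i$, $i\in V$, is universally $L^p$-improving. $\Lambda^K_H$ is $L^p$-improving if there exist $p_v\in[1,\infty]$ with $\sum_v1/p_v>1$ and $C$ such that $\Lambda^K_H((f_v))\le C\prod_v\|f_v\|_{L^{p_v}}$.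 *)

theory Defs
  imports "HOL-Analysis.Analysis" "HOL-Probability.Probability"
begin

definition graph :: "nat set \<Rightarrow> nat set set \<Rightarrow> bool" where
  "graph V E \<longleftrightarrow> finite V \<and> (\<forall>e\<in>E. e \<subseteq> V \<and> card e = 2)"

definition connected_graph :: "nat set \<Rightarrow> nat set set \<Rightarrow> bool" where
  "connected_graph V E \<longleftrightarrow> graph V E \<and> V \<noteq> {} \<and>
     (\<forall>u\<in>V. \<forall>w\<in>V. (\<lambda>a b. {a, b} \<in> E)\<^sup>*\<^sup>* u w)"

definition epow :: "ennreal \<Rightarrow> real \<Rightarrow> ennreal" where
  "epow t q = (if t = \<top> then \<top> else ennreal (enn2real t powr q))"

definition Lpnorm :: "ennreal \<Rightarrow> ('a::euclidean_space \<Rightarrow> ennreal) \<Rightarrow> ennreal" where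
  "Lpnorm p f = (if p = \<top> then esssup lborel f
      else epow (\<integral>\<^sup>+ x. epow (f x) (enn2real p) \<partial>lborel) (1 / enn2real p))"

definition locally_integrable_kernel :: "('a::euclidean_space \<Rightarrow> 'a \<Rightarrow> real) \<Rightarrow> bool" where
  "locally_integrable_kernel K \<longleftrightarrow>
     (\<forall>S. compact S \<longrightarrow> set_integrable lborel S (\<lambda>z. K (fst z) (snd z)))"

definition kernel_prod :: "('a \<Rightarrow> 'a \<Rightarrow> real) \<Rightarrow> nat set set \<Rightarrow> (nat \<Rightarrow> 'a) \<Rightarrow> ennreal" where
  "kernel_prod K E x = (\<Prod>e\<in>E. ennreal (K (x (Min e)) (x (Max e))))"

definition Lambda :: "('a::euclidean_space \<Rightarrow> 'a \<Rightarrow> real) \<Rightarrow> nat set \<Rightarrow> nat set set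
    \<Rightarrow> (nat \<Rightarrow> 'a \<Rightarrow> ennreal) \<Rightarrow> ennreal" where
  "Lambda K V E f = (\<integral>\<^sup>+ x. kernel_prod K E x * (\<Prod>v\<in>V. f v (x v)) \<partial>(PiM V (\<lambda>_. lborel)))"

definition Top :: "('a::euclidean_space \<Rightarrow> 'a \<Rightarrow> real) \<Rightarrow> nat set \<Rightarrow> nat set set \<Rightarrow> nat
    \<Rightarrow> (nat \<Rightarrow> 'a \<Rightarrow> ennreal) \<Rightarrow> 'a \<Rightarrow> ennreal" where
  "Top K V E i g y = (\<integral>\<^sup>+ x. kernel_prod K E (x(i := y)) * (\<Prod>v\<in>V - {i}. g v (x v))
      \<partial>(PiM (V - {i}) (\<lambda>_. lborel)))"

definition admissible_fns :: "nat set \<Rightarrow> (nat \<Rightarrow> 'a::euclidean_space \<Rightarrow> ennreal) \<Rightarrow> bool" where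
  "admissible_fns W f \<longleftrightarrow> (\<forall>v\<in>W. f v \<in> borel_measurable lborel)"

definition nontrivial_estimate_at ::
    "('a::euclidean_space \<Rightarrow> 'a \<Rightarrow> real) \<Rightarrow> nat set \<Rightarrow> nat set set \<Rightarrow> nat \<Rightarrow> bool" where
  "nontrivial_estimate_at K V E i \<longleftrightarrow>
     (\<exists>p :: nat \<Rightarrow> ennreal. (\<forall>v\<in>V. 1 \<le> p v) \<and> p i < \<top> \<and> (\<Sum>v\<in>V. 1 / p v) \<ge> 1 \<and>
       (\<exists>C::real. \<forall>f. admissible_fns V f \<longrightarrow>
          Lambda K V E f \<le> ennreal C * (\<Prod>v\<in>V. Lpnorm (p v) (f v))))"

definition univ_Lp_improving_op ::
    "('a::euclidean_space \<Rightarrow> 'a \<Rightarrow> real) \<Rightarrow> nat set \<Rightarrow> nat set set \<Rightarrow> nat \<Rightarrow> bool" where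
  "univ_Lp_improving_op K V E i \<longleftrightarrow>
     (\<forall>r::real. 1 < r \<longrightarrow>
       (\<exists>p :: nat \<Rightarrow> ennreal. (\<forall>v\<in>V - {i}. 1 \<le> p v) \<and>
          (\<Sum>v\<in>V - {i}. 1 / p v) > 1 / ennreal r \<and>
          (\<exists>C::real. \<forall>g. admissible_fns (V - {i}) g \<longrightarrow>
             Lpnorm (ennreal r) (Top K V E i g) \<le> ennreal C * (\<Prod>v\<in>V - {i}. Lpnorm (p v) (g v)))))"

definition univ_Lp_improving ::
    "('a::euclidean_space \<Rightarrow> 'a \<Rightarrow> real) \<Rightarrow> nat set \<Rightarrow> nat set set \<Rightarrow> bool" where
  "univ_Lp_improving K V E \<longleftrightarrow> (\<forall>i\<in>V. univ_Lp_improving_op K V E i)"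

definition Lp_improving ::
    "('a::euclidean_space \<Rightarrow> 'a \<Rightarrow> real) \<Rightarrow> nat set \<Rightarrow> nat set set \<Rightarrow> bool" where
  "Lp_improving K V E \<longleftrightarrow>
     (\<exists>p :: nat \<Rightarrow> ennreal. (\<forall>v\<in>V. 1 \<le> p v) \<and> (\<Sum>v\<in>V. 1 / p v) > 1 \<and>
       (\<exists>C::real. \<forall>f. admissible_fns V f \<longrightarrow>
          Lambda K V E f \<le> ennreal C * (\<Prod>v\<in>V. Lpnorm (p v) (f v))))"

end

theory Submission
  imports Defs
begin

lemma epow_top[simp]: "epow \<top> q = \<top>" by (simp add: epow_def)
lemma epow_fin: "x \<noteq> \<top> \<Longrightarrow> epow x q = ennreal (enn2real x powr q)" by (simp add: epow_def)
lemma epow_ennreal: "0 \<le> a \<Longrightarrow> epow (ennreal a) q = ennreal (a powr q)" by (simp add: epow_def)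
lemma epow_0[simp]: "epow 0 q = 0" by (simp add: epow_def)

lemma epow_eq_0_iff: "epow x q = 0 \<longleftrightarrow> x = 0"
  by (cases x) (auto simp: epow_def ennreal_eq_0_iff)

lemma epow_1[simp]: "epow x 1 = x"
  by (cases x) (auto simp: epow_def)

lemma epow_mono: "x \<le> y \<Longrightarrow> 0 \<le> q \<Longrightarrow> epow x q \<le> epow y q"
proof (cases "y = \<top>")
  case False
  assume xy: "x \<le> y" and q: "0 \<le> q"
  then have x: "x \<noteq> \<top>" using False by (auto simp: top_unique)
  have "enn2real x \<le> enn2real y" using xy False by (simp add: enn2real_mono less_top)
  then have "enn2real x powr q \<le> enn2real y powr q" using q by (simp add: powr_mono2)
  then show ?thesis using x False by (simp add: epow_fin ennreal_leI)
qed simp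

lemma epow_mult: "0 < q \<Longrightarrow> epow (x * y) q = epow x q * epow y q"
proof (cases "x = \<top> \<or> y = \<top>")
  case True
  assume q: "0 < q"
  show ?thesis
  proof (cases "x = 0 \<or> y = 0")
    case True then show ?thesis by auto
  next
    case False
    then have "epow x q \<noteq> 0" "epow y q \<noteq> 0" by (auto simp: epow_eq_0_iff)
    with True False show ?thesis by (auto simp: ennreal_mult_eq_top_iff)
  qed
next
  case False
  define a where "a = enn2real x"
  define b where "b = enn2real y"
  have "x = ennreal a" "y = ennreal b" "0 \<le> a" "0 \<le> b"
    using False by (auto simp: a_def b_def less_top[symmetric])
  then show ?thesis
    by (simp add: epow_ennreal ennreal_mult[symmetric] powr_mult)
qed

lemma epow_epow: "0 \<le> q1 \<Longrightarrow> epow (epow x q1) q2 = epow x (q1 * q2)"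
  by (cases x) (auto simp: epow_def powr_powr)

lemma borel_measurable_epow[measurable]:
  "f \<in> borel_measurable M \<Longrightarrow> (\<lambda>x. epow (f x) q) \<in> borel_measurable M"
  unfolding epow_def apply measurable
  by (auto simp: pred_eq_const1 pred_eq_const2)

lemma young_scaled:
  fixes s t a b al be :: real
  assumes "al > 1" "be > 1" "1/al + 1/be = 1" "s \<ge> 0" "t \<ge> 0" "a > 0" "b > 0"
  shows "s * t \<le> (a powr (1/al) * b powr (1/be)) *
           (s powr al / (al * a) + t powr be / (be * b))"
proof -
  define ca where "ca = a powr (1/al)"
  define cb where "cb = b powr (1/be)"
  have ca: "ca > 0" "ca powr al = a" using assms by (auto simp: ca_def powr_powr)
  have cb: "cb > 0" "cb powr be = b" using assms by (auto simp: cb_def powr_powr)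
  have "(s/ca) * (t/cb) \<le> (s/ca) powr al / al + (t/cb) powr be / be"
    using assms ca cb by (intro Youngs_inequality) auto
  also have "(s/ca) powr al = s powr al / a" using ca assms by (simp add: powr_divide)
  also have "(t/cb) powr be = t powr be / b" using cb assms by (simp add: powr_divide)
  finally have "(s/ca) * (t/cb) \<le> s powr al / (al * a) + t powr be / (be * b)"
    by (simp add: field_simps)
  then have "ca * cb * ((s/ca) * (t/cb)) \<le> ca * cb * (s powr al / (al * a) + t powr be / (be * b))"
    using ca cb by (intro mult_left_mono) auto
  moreover have "ca * cb * ((s/ca) * (t/cb)) = s * t" using ca cb by simp
  ultimately have "s * t \<le> ca * cb * (s powr al / (al * a) + t powr be / (be * b))" by linarith
  then show ?thesis unfolding ca_def cb_def .
qed

lemma holder_nn: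
  fixes u v :: "'b \<Rightarrow> ennreal"
  assumes u: "u \<in> borel_measurable M" and v: "v \<in> borel_measurable M"
    and al: "al > 1" and be: "be > 1" and ab: "1/al + 1/be = 1"
  shows "(\<integral>\<^sup>+x. u x * v x \<partial>M) \<le> epow (\<integral>\<^sup>+x. epow (u x) al \<partial>M) (1/al) * epow (\<integral>\<^sup>+x. epow (v x) be \<partial>M) (1/be)"
proof -
  define A where "A = (\<integral>\<^sup>+x. epow (u x) al \<partial>M)"
  define B where "B = (\<integral>\<^sup>+x. epow (v x) be \<partial>M)"
  show ?thesis
  proof (cases "A = 0 \<or> B = 0")
    case True
    then have "AE x in M. u x * v x = 0"
    proof
      assume "A = 0"
      then have "AE x in M. epow (u x) al = 0" unfolding A_def using u
        by (subst (asm) nn_integral_0_iff_AE) auto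
      then show ?thesis by eventually_elim (auto simp: epow_eq_0_iff)
    next
      assume "B = 0"
      then have "AE x in M. epow (v x) be = 0" unfolding B_def using v
        by (subst (asm) nn_integral_0_iff_AE) auto
      then show ?thesis by eventually_elim (auto simp: epow_eq_0_iff)
    qed
    then have "(\<integral>\<^sup>+x. u x * v x \<partial>M) = 0"
      using u v by (subst nn_integral_0_iff_AE) auto
    then show ?thesis by simp
  next
    case False
    then have A0: "A \<noteq> 0" and B0: "B \<noteq> 0" by auto
    show ?thesis
    proof (cases "A = \<top> \<or> B = \<top>")
      case True
      then have "epow A (1/al) * epow B (1/be) = \<top>"
        using A0 B0 by (auto simp: epow_eq_0_iff ennreal_mult_eq_top_iff)
      then show ?thesis by (simp add: A_def[symmetric] B_def[symmetric])
    next
      case False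
      define a where "a = enn2real A"
      define b where "b = enn2real B"
      have a: "A = ennreal a" "a > 0" using False A0 unfolding a_def
        by (auto simp: enn2real_positive_iff less_top[symmetric] zero_less_iff_neq_zero)
      have b: "B = ennreal b" "b > 0" using False B0 unfolding b_def
        by (auto simp: enn2real_positive_iff less_top[symmetric] zero_less_iff_neq_zero)
      define c where "c = a powr (1/al) * b powr (1/be)"
      have c: "c > 0" using a b by (simp add: c_def)
      have pw: "u x * v x \<le> ennreal (c / (al * a)) * epow (u x) al + ennreal (c / (be * b)) * epow (v x) be" for x
      proof (cases "u x = \<top> \<or> v x = \<top>")
        case True
        show ?thesis
        proof (cases "u x = 0 \<or> v x = 0")
          case True then show ?thesis by auto
        next
          case False
          then have "epow (u x) al \<noteq> 0" "epow (v x) be \<noteq> 0" by (auto simp: epow_eq_0_iff)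
          moreover have "c / (al * a) > 0" "c / (be * b) > 0" using c a b al be by auto
          ultimately show ?thesis using True by (auto simp: ennreal_mult_top)
        qed
      next
        case False
        define s where "s = enn2real (u x)"
        define t where "t = enn2real (v x)"
        have st: "u x = ennreal s" "v x = ennreal t" "s \<ge> 0" "t \<ge> 0"
          using False by (auto simp: s_def t_def less_top[symmetric])
        have "s * t \<le> c * (s powr al / (al * a) + t powr be / (be * b))"
          unfolding c_def using young_scaled[OF al be ab st(3,4) a(2) b(2)] .
        also have "\<dots> = c / (al * a) * s powr al + c / (be * b) * t powr be"
          by (simp add: field_simps)
        finally show ?thesis using st c a b al be
          by (simp add: epow_ennreal ennreal_mult[symmetric] ennreal_plus[symmetric] ennreal_leI del: ennreal_plus)
      qed
      have "(\<integral>\<^sup>+x. u x * v x \<partial>M) \<le> (\<integral>\<^sup>+x. ennreal (c / (al * a)) * epow (u x) al + ennreal (c / (be * b)) * epow (v x) be \<partial>M)"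
        by (intro nn_integral_mono pw)
      also have "\<dots> = ennreal (c / (al * a)) * A + ennreal (c / (be * b)) * B"
        unfolding A_def B_def using u v by (simp add: nn_integral_add nn_integral_cmult)
      also have "ennreal (c / (al * a)) * A = ennreal (c / al)"
      proof -
        have "ennreal (c / (al * a)) * A = ennreal (c / (al * a) * a)"
          unfolding a(1) by (rule ennreal_mult[symmetric]) (use a(2) c al in auto)
        also have "c / (al * a) * a = c / al" using a(2) by simp
        finally show ?thesis .
      qed
      also have "ennreal (c / (be * b)) * B = ennreal (c / be)"
      proof -
        have "ennreal (c / (be * b)) * B = ennreal (c / (be * b) * b)"
          unfolding b(1) by (rule ennreal_mult[symmetric]) (use b(2) c be in auto)
        also have "c / (be * b) * b = c / be" using b(2) by simp
        finally show ?thesis .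
      qed
      also have "ennreal (c / al) + ennreal (c / be) = ennreal (c / al + c / be)"
        using c al be by (intro ennreal_plus[symmetric]) auto
      also have "c / al + c / be = c * (1/al + 1/be)" by (simp add: divide_inverse distrib_left)
      also have "\<dots> = c" using ab by simp
      also have "ennreal c = epow A (1/al) * epow B (1/be)"
        unfolding a(1) b(1) c_def using a(2) b(2) by (simp add: epow_ennreal ennreal_mult)
      finally have "(\<integral>\<^sup>+x. u x * v x \<partial>M) \<le> epow A (1/al) * epow B (1/be)" .
      then show ?thesis by (simp only: A_def B_def)
    qed
  qed
qed

lemma Lpnorm_fin: "0 \<le> p \<Longrightarrow> Lpnorm (ennreal p) f = epow (\<integral>\<^sup>+ x. epow (f x) p \<partial>lborel) (1 / p)"
  by (simp add: Lpnorm_def)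

lemma Lpnorm_holder:
  fixes f g :: "'a::euclidean_space \<Rightarrow> ennreal" and p a r :: real
  assumes f: "f \<in> borel_measurable lborel" and g: "g \<in> borel_measurable lborel"
    and p: "p \<ge> 1" and a: "a > p" and r: "r > p" and par: "1/p = 1/a + 1/r"
  shows "Lpnorm (ennreal p) (\<lambda>x. f x * g x) \<le> Lpnorm (ennreal a) f * Lpnorm (ennreal r) g"
proof -
  have al: "a / p > 1" and be: "r / p > 1" using p a r by auto
  have ab: "1 / (a/p) + 1 / (r/p) = 1" using par p by (simp add: field_simps)
  have "(\<integral>\<^sup>+ x. epow (f x * g x) p \<partial>lborel) = (\<integral>\<^sup>+ x. epow (f x) p * epow (g x) p \<partial>lborel)"
    using p by (simp add: epow_mult)
  also have "\<dots> \<le> epow (\<integral>\<^sup>+x. epow (epow (f x) p) (a/p) \<partial>lborel) (1/(a/p)) *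
      epow (\<integral>\<^sup>+x. epow (epow (g x) p) (r/p) \<partial>lborel) (1/(r/p))"
    using f g by (intro holder_nn al be ab) auto
  also have "\<dots> = epow (\<integral>\<^sup>+x. epow (f x) a \<partial>lborel) (p/a) *
      epow (\<integral>\<^sup>+x. epow (g x) r \<partial>lborel) (p/r)"
    using p by (simp add: epow_epow)
  finally have le1: "(\<integral>\<^sup>+ x. epow (f x * g x) p \<partial>lborel) \<le> epow (\<integral>\<^sup>+x. epow (f x) a \<partial>lborel) (p/a) *
      epow (\<integral>\<^sup>+x. epow (g x) r \<partial>lborel) (p/r)" .
  define I1 where "I1 = (\<integral>\<^sup>+x. epow (f x) a \<partial>lborel)"
  define I2 where "I2 = (\<integral>\<^sup>+x. epow (g x) r \<partial>lborel)"
  have "epow (\<integral>\<^sup>+ x. epow (f x * g x) p \<partial>lborel) (1/p) \<le> epow (epow I1 (p/a) * epow I2 (p/r)) (1/p)"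
    using p le1 unfolding I1_def I2_def by (intro epow_mono) auto
  also have "\<dots> = epow (epow I1 (p/a)) (1/p) * epow (epow I2 (p/r)) (1/p)"
    using p by (intro epow_mult) auto
  also have "epow (epow I1 (p/a)) (1/p) = epow I1 (p/a * (1/p))"
    using p a by (intro epow_epow) auto
  also have "p/a * (1/p) = 1/a" using p by simp
  also have "epow (epow I2 (p/r)) (1/p) = epow I2 (p/r * (1/p))"
    using p r by (intro epow_epow) auto
  also have "p/r * (1/p) = 1/r" using p by simp
  finally have fin: "epow (\<integral>\<^sup>+ x. epow (f x * g x) p \<partial>lborel) (1/p) \<le> epow I1 (1/a) * epow I2 (1/r)" .
  have L1: "Lpnorm (ennreal p) (\<lambda>x. f x * g x) = epow (\<integral>\<^sup>+ x. epow (f x * g x) p \<partial>lborel) (1/p)"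
    using p by (intro Lpnorm_fin) simp
  have L2: "Lpnorm (ennreal a) f = epow I1 (1/a)"
    unfolding I1_def using p a by (intro Lpnorm_fin) simp
  have L3: "Lpnorm (ennreal r) g = epow I2 (1/r)"
    unfolding I2_def using p r by (intro Lpnorm_fin) simp
  show ?thesis unfolding L1 L2 L3 by (rule fin)
qed

lemma psf: "product_sigma_finite (\<lambda>_::nat. lborel::'a::euclidean_space measure)"
  by standard

lemma sf_PiM: "finite J \<Longrightarrow> sigma_finite_measure (PiM J (\<lambda>_::nat. lborel::'a::euclidean_space measure))"
  by (rule product_sigma_finite.sigma_finite[OF psf])

lemma K_meas:
  fixes K :: "'a::euclidean_space \<Rightarrow> 'a \<Rightarrow> real"
  assumes "locally_integrable_kernel K"
  shows "(\<lambda>z. K (fst z) (snd z)) \<in> borel_measurable (borel \<Otimes>\<^sub>M borel)"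
proof -
  let ?K = "\<lambda>z::'a \<times> 'a. K (fst z) (snd z)"
  have m: "(\<lambda>z. indicator (cball 0 (real i)) z *\<^sub>R ?K z) \<in> borel_measurable borel" for i
  proof -
    have "set_integrable lborel (cball 0 (real i)) ?K"
      using assms unfolding locally_integrable_kernel_def by auto
    then have "(\<lambda>z. indicator (cball 0 (real i)) z *\<^sub>R ?K z) \<in> borel_measurable lborel"
      unfolding set_integrable_def by (rule borel_measurable_integrable)
    then show ?thesis by simp
  qed
  have "?K \<in> borel_measurable borel"
  proof (rule borel_measurable_LIMSEQ_real[OF _ m])
    fix z :: "'a \<times> 'a"
    show "(\<lambda>i. indicator (cball 0 (real i)) z *\<^sub>R ?K z) \<longlonglongrightarrow> ?K z"
    proof (rule tendsto_eventually)
      show "\<forall>\<^sub>F i in sequentially. indicator (cball 0 (real i)) z *\<^sub>R ?K z = ?K z"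
        unfolding eventually_sequentially
      proof (intro exI allI impI)
        fix i assume "nat \<lceil>norm z\<rceil> \<le> i"
        then have "norm z \<le> real i" by linarith
        then show "indicator (cball 0 (real i)) z *\<^sub>R ?K z = ?K z" by (simp add: indicator_def dist_norm)
      qed
    qed
  qed
  then show ?thesis by (simp add: borel_prod)
qed

lemma edge_facts:
  assumes "card e = 2"
  shows "Min e \<in> e" "Max e \<in> e"
proof -
  have "finite e" "e \<noteq> {}" using assms by (auto intro: card_ge_0_finite)
  then show "Min e \<in> e" "Max e \<in> e" by auto
qed

lemma kp_meas:
  fixes K :: "'a::euclidean_space \<Rightarrow> 'a \<Rightarrow> real"
  assumes Km: "(\<lambda>z. K (fst z) (snd z)) \<in> borel_measurable (borel \<Otimes>\<^sub>M borel)"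
    and E: "\<And>e. e \<in> E \<Longrightarrow> e \<subseteq> S \<and> card e = 2"
    and h: "\<And>i. i \<in> S \<Longrightarrow> (\<lambda>\<omega>. h \<omega> i) \<in> borel_measurable M"
  shows "(\<lambda>\<omega>. kernel_prod K E (h \<omega>)) \<in> borel_measurable M"
  unfolding kernel_prod_def
proof (rule borel_measurable_prod_ennreal)
  fix e assume e: "e \<in> E"
  then have "Min e \<in> S" "Max e \<in> S" using E edge_facts by blast+
  then have "(\<lambda>\<omega>. (h \<omega> (Min e), h \<omega> (Max e))) \<in> measurable M (borel \<Otimes>\<^sub>M borel)"
    using h by (intro measurable_Pair) auto
  from measurable_compose[OF this Km]
  have "(\<lambda>\<omega>. K (h \<omega> (Min e)) (h \<omega> (Max e))) \<in> borel_measurable M" by simp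
  from measurable_compose[OF this measurable_ennreal]
  show "(\<lambda>\<omega>. ennreal (K (h \<omega> (Min e)) (h \<omega> (Max e)))) \<in> borel_measurable M"
    by simp
qed

lemma kp_cong:
  assumes "\<And>e. e \<in> E \<Longrightarrow> e \<subseteq> S \<and> card e = 2" and "\<And>i. i \<in> S \<Longrightarrow> x i = y i"
  shows "kernel_prod K E x = kernel_prod K E y"
  unfolding kernel_prod_def
proof (rule prod.cong[OF refl])
  fix e assume e: "e \<in> E"
  then have "Min e \<in> S" "Max e \<in> S" using assms(1) edge_facts by blast+
  then show "ennreal (K (x (Min e)) (x (Max e))) = ennreal (K (y (Min e)) (y (Max e)))"
    using assms(2) by simp
qed

lemma kp_union:
  assumes "finite E1" "finite E2" "E1 \<inter> E2 = {}"
  shows "kernel_prod K (E1 \<union> E2) x = kernel_prod K E1 x * kernel_prod K E2 x"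
  unfolding kernel_prod_def using assms by (rule prod.union_disjoint)

lemma graph_finite_E: "graph V E \<Longrightarrow> finite E"
proof -
  assume "graph V E"
  then have "E \<subseteq> Pow V" "finite V" unfolding graph_def by auto
  then show "finite E" using finite_subset by blast
qed

lemma comp_meas: "i \<in> I \<Longrightarrow> (\<lambda>x. x i) \<in> borel_measurable (PiM I (\<lambda>_::nat. lborel::'a::euclidean_space measure))"
  using measurable_component_singleton[of i I "\<lambda>_. lborel::'a measure"] by simp

lemma graph_E: "graph V E \<Longrightarrow> e \<in> E \<Longrightarrow> e \<subseteq> V \<and> card e = 2"
  unfolding graph_def by auto

lemma adm_meas: "admissible_fns W f \<Longrightarrow> v \<in> W \<Longrightarrow> f v \<in> borel_measurable borel"
  unfolding admissible_fns_def by auto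

lemma Top_meas:
  fixes K :: "'a::euclidean_space \<Rightarrow> 'a \<Rightarrow> real" and f :: "nat \<Rightarrow> 'a \<Rightarrow> ennreal"
  assumes Km: "(\<lambda>z. K (fst z) (snd z)) \<in> borel_measurable (borel \<Otimes>\<^sub>M borel)"
    and G: "graph V E" and f: "admissible_fns (V - {c}) f"
  shows "Top K V E c f \<in> borel_measurable borel"
proof -
  have fin: "finite (V - {c})" using G unfolding graph_def by auto
  interpret S: sigma_finite_measure "PiM (V - {c}) (\<lambda>_::nat. lborel::'a measure)"
    by (rule sf_PiM[OF fin])
  let ?N = "borel \<Otimes>\<^sub>M PiM (V - {c}) (\<lambda>_::nat. lborel::'a measure)"
  have h: "(\<lambda>\<omega>. ((snd \<omega>)(c := fst \<omega>)) i) \<in> borel_measurable ?N" if "i \<in> V" for i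
  proof (cases "i = c")
    case True then show ?thesis by simp
  next
    case False
    then have "i \<in> V - {c}" using that by auto
    from measurable_compose[OF measurable_snd comp_meas[OF this]] False
    show ?thesis by simp
  qed
  have k: "(\<lambda>\<omega>. kernel_prod K E ((snd \<omega>)(c := fst \<omega>))) \<in> borel_measurable ?N"
    by (rule kp_meas[OF Km, where S = V]) (use G graph_E h in auto)
  have p: "(\<lambda>\<omega>. \<Prod>v\<in>V - {c}. f v (snd \<omega> v)) \<in> borel_measurable ?N"
  proof (rule borel_measurable_prod_ennreal)
    fix v assume v: "v \<in> V - {c}"
    from measurable_compose[OF measurable_compose[OF measurable_snd comp_meas[OF v]] adm_meas[OF f v]]
    show "(\<lambda>\<omega>. f v (snd \<omega> v)) \<in> borel_measurable ?N" .
  qed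
  have "(\<lambda>(y, x). kernel_prod K E (x(c := y)) * (\<Prod>v\<in>V - {c}. f v (x v))) \<in> borel_measurable ?N"
    using borel_measurable_times_ennreal[OF k p] by (simp add: case_prod_beta')
  from S.borel_measurable_nn_integral[OF this]
  show ?thesis unfolding Top_def .
qed

lemma Lambda_split:
  fixes K :: "'a::euclidean_space \<Rightarrow> 'a \<Rightarrow> real" and f :: "nat \<Rightarrow> 'a \<Rightarrow> ennreal"
  assumes Km: "(\<lambda>z. K (fst z) (snd z)) \<in> borel_measurable (borel \<Otimes>\<^sub>M borel)"
    and G1: "graph V1 E1" and G2: "graph V2 E2" and V12: "V1 \<inter> V2 = {c}"
    and f: "admissible_fns (V1 \<union> V2) f"
  shows "Lambda K (V1 \<union> V2) (E1 \<union> E2) f = Lambda K V2 E2 (f(c := \<lambda>y. f c y * Top K V1 E1 c f y))"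
proof -
  define J where "J = V1 - {c}"
  define g where "g = f(c := \<lambda>y. f c y * Top K V1 E1 c f y)"
  have fin: "finite V1" "finite V2" "finite J" using G1 G2 unfolding graph_def J_def by auto
  have cV: "c \<in> V1" "c \<in> V2" using V12 by auto
  have VJ: "V1 \<union> V2 = V2 \<union> J" "V2 \<inter> J = {}" using V12 by (auto simp: J_def)
  have E1: "\<And>e. e \<in> E1 \<Longrightarrow> e \<subseteq> V1 \<and> card e = 2" using G1 graph_E by blast
  have E2: "\<And>e. e \<in> E2 \<Longrightarrow> e \<subseteq> V2 \<and> card e = 2" using G2 graph_E by blast
  have Edisj: "E1 \<inter> E2 = {}"
  proof (rule ccontr)
    assume "E1 \<inter> E2 \<noteq> {}"
    then obtain e where e: "e \<in> E1" "e \<in> E2" by auto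
    then have "e \<subseteq> {c}" using E1 E2 V12 by blast
    then have "card e \<le> card {c}" by (intro card_mono) auto
    then show False using E1[OF e(1)] by simp
  qed
  have finE: "finite E1" "finite E2" using G1 G2 by (auto intro: graph_finite_E)
  have fm: "\<And>v. v \<in> V1 \<union> V2 \<Longrightarrow> f v \<in> borel_measurable borel" using f adm_meas by blast
  interpret P: product_sigma_finite "\<lambda>_::nat. lborel::'a measure" by (rule psf)
  define F where "F x = kernel_prod K (E1 \<union> E2) x * (\<Prod>v\<in>V2 \<union> J. f v (x v))" for x
  have Fm: "F \<in> borel_measurable (PiM (V2 \<union> J) (\<lambda>_. lborel))"
  proof -
    have k: "(\<lambda>x. kernel_prod K (E1 \<union> E2) x) \<in> borel_measurable (PiM (V2 \<union> J) (\<lambda>_. lborel))"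
      by (rule kp_meas[OF Km, where S = "V2 \<union> J" and h = "\<lambda>x. x"]) (use E1 E2 VJ comp_meas in auto)
    have p: "(\<lambda>x. \<Prod>v\<in>V2 \<union> J. f v (x v)) \<in> borel_measurable (PiM (V2 \<union> J) (\<lambda>_. lborel))"
    proof (rule borel_measurable_prod_ennreal)
      fix v assume v: "v \<in> V2 \<union> J"
      then have "f v \<in> borel_measurable borel" using fm VJ by auto
      from measurable_compose[OF comp_meas[OF v] this]
      show "(\<lambda>x. f v (x v)) \<in> borel_measurable (PiM (V2 \<union> J) (\<lambda>_. lborel))" .
    qed
    show ?thesis unfolding F_def by (rule borel_measurable_times_ennreal[OF k p])
  qed
  have inner: "(\<integral>\<^sup>+ y. F (merge V2 J (x, y)) \<partial>PiM J (\<lambda>_. lborel)) =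
      kernel_prod K E2 x * (\<Prod>v\<in>V2. g v (x v))"
    if x: "x \<in> space (PiM V2 (\<lambda>_. lborel::'a measure))" for x
  proof -
    define X where "X = kernel_prod K E2 x * (\<Prod>v\<in>V2. f v (x v))"
    define Y where "Y y = kernel_prod K E1 (y(c := x c)) * (\<Prod>v\<in>J. f v (y v))" for y
    have FY: "F (merge V2 J (x, y)) = X * Y y" for y
    proof -
      let ?m = "merge V2 J (x, y)"
      have k0: "kernel_prod K (E1 \<union> E2) ?m = kernel_prod K E1 ?m * kernel_prod K E2 ?m"
        by (rule kp_union[OF finE Edisj])
      have k2: "kernel_prod K E2 ?m = kernel_prod K E2 x"
        by (rule kp_cong[where S = V2]) (use E2 VJ in auto)
      have k1: "kernel_prod K E1 ?m = kernel_prod K E1 (y(c := x c))"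
      proof (rule kp_cong[where S = V1])
        fix i assume i: "i \<in> V1"
        show "?m i = (y(c := x c)) i"
        proof (cases "i = c")
          case True then show ?thesis using cV VJ by simp
        next
          case False then have "i \<in> J" using i by (auto simp: J_def)
          then show ?thesis using VJ False by simp
        qed
      qed (use E1 in auto)
      have p0: "(\<Prod>v\<in>V2 \<union> J. f v (?m v)) = (\<Prod>v\<in>V2. f v (?m v)) * (\<Prod>v\<in>J. f v (?m v))"
        by (rule prod.union_disjoint) (use fin VJ in auto)
      have p1: "(\<Prod>v\<in>V2. f v (?m v)) = (\<Prod>v\<in>V2. f v (x v))"
        by (rule prod.cong) (use VJ in auto)
      have p2: "(\<Prod>v\<in>J. f v (?m v)) = (\<Prod>v\<in>J. f v (y v))"
        by (rule prod.cong) (use VJ in auto)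
      show ?thesis unfolding F_def X_def Y_def k0 k1 k2 p0 p1 p2 by (simp add: ac_simps)
    qed
    have Ym: "Y \<in> borel_measurable (PiM J (\<lambda>_. lborel))"
    proof -
      have h: "(\<lambda>y. (y(c := x c)) i) \<in> borel_measurable (PiM J (\<lambda>_. lborel::'a measure))" if "i \<in> V1" for i
      proof (cases "i = c")
        case True then show ?thesis by simp
      next
        case False then have "i \<in> J" using that by (auto simp: J_def)
        from comp_meas[OF this] False show ?thesis by simp
      qed
      have k: "(\<lambda>y. kernel_prod K E1 (y(c := x c))) \<in> borel_measurable (PiM J (\<lambda>_. lborel::'a measure))"
        by (rule kp_meas[OF Km, where S = V1]) (use E1 h in auto)
      have p: "(\<lambda>y. \<Prod>v\<in>J. f v (y v)) \<in> borel_measurable (PiM J (\<lambda>_. lborel::'a measure))"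
      proof (rule borel_measurable_prod_ennreal)
        fix v assume v: "v \<in> J"
        then have "f v \<in> borel_measurable borel" using fm by (auto simp: J_def)
        from measurable_compose[OF comp_meas[OF v] this]
        show "(\<lambda>y. f v (y v)) \<in> borel_measurable (PiM J (\<lambda>_. lborel))" .
      qed
      show ?thesis unfolding Y_def by (rule borel_measurable_times_ennreal[OF k p])
    qed
    have "(\<integral>\<^sup>+ y. F (merge V2 J (x, y)) \<partial>PiM J (\<lambda>_. lborel)) = (\<integral>\<^sup>+ y. X * Y y \<partial>PiM J (\<lambda>_. lborel))"
      by (simp add: FY)
    also have "\<dots> = X * (\<integral>\<^sup>+ y. Y y \<partial>PiM J (\<lambda>_. lborel))"
      by (rule nn_integral_cmult[OF Ym])
    also have "(\<integral>\<^sup>+ y. Y y \<partial>PiM J (\<lambda>_. lborel)) = Top K V1 E1 c f (x c)"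
      unfolding Top_def Y_def J_def ..
    also have "X * Top K V1 E1 c f (x c) = kernel_prod K E2 x * (\<Prod>v\<in>V2. g v (x v))"
    proof -
      have "(\<Prod>v\<in>V2. g v (x v)) = g c (x c) * (\<Prod>v\<in>V2 - {c}. g v (x v))"
        by (rule prod.remove) (use fin cV in auto)
      also have "(\<Prod>v\<in>V2 - {c}. g v (x v)) = (\<Prod>v\<in>V2 - {c}. f v (x v))"
        by (rule prod.cong) (auto simp: g_def)
      also have "(\<Prod>v\<in>V2. f v (x v)) = f c (x c) * (\<Prod>v\<in>V2 - {c}. f v (x v))"
        by (rule prod.remove) (use fin cV in auto)
      moreover have "g c (x c) = f c (x c) * Top K V1 E1 c f (x c)" by (simp add: g_def)
      ultimately show ?thesis unfolding X_def by (simp add: ac_simps)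
    qed
    finally show ?thesis .
  qed
  have "Lambda K (V1 \<union> V2) (E1 \<union> E2) f = integral\<^sup>N (PiM (V2 \<union> J) (\<lambda>_. lborel)) F"
    unfolding Lambda_def F_def VJ(1) ..
  also have "\<dots> = (\<integral>\<^sup>+ x. (\<integral>\<^sup>+ y. F (merge V2 J (x, y)) \<partial>PiM J (\<lambda>_. lborel)) \<partial>PiM V2 (\<lambda>_. lborel))"
    by (rule P.product_nn_integral_fold[OF VJ(2) fin(2,3) Fm])
  also have "\<dots> = (\<integral>\<^sup>+ x. kernel_prod K E2 x * (\<Prod>v\<in>V2. g v (x v)) \<partial>PiM V2 (\<lambda>_. lborel))"
    by (rule nn_integral_cong) (rule inner)
  also have "\<dots> = Lambda K V2 E2 g" unfolding Lambda_def ..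
  finally show ?thesis unfolding g_def .
qed

lemma main_lemma:
  fixes K :: "'a::euclidean_space \<Rightarrow> 'a \<Rightarrow> real"
  assumes Km: "(\<lambda>z. K (fst z) (snd z)) \<in> borel_measurable (borel \<Otimes>\<^sub>M borel)"
    and G1: "graph V1 E1" and G2: "graph V2 E2" and V12: "V1 \<inter> V2 = {c}"
    and U: "univ_Lp_improving_op K V1 E1 c" and N: "nontrivial_estimate_at K V2 E2 c"
  shows "Lp_improving K (V1 \<union> V2) (E1 \<union> E2)"
proof -
  from N obtain p2 :: "nat \<Rightarrow> ennreal" and C2 :: real where
    p2: "\<forall>v\<in>V2. 1 \<le> p2 v" "p2 c < \<top>" "(\<Sum>v\<in>V2. 1 / p2 v) \<ge> 1" and
    C2: "\<forall>f. admissible_fns V2 f \<longrightarrow> Lambda K V2 E2 f \<le> ennreal C2 * (\<Prod>v\<in>V2. Lpnorm (p2 v) (f v))"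
    unfolding nontrivial_estimate_at_def by blast
  have cV: "c \<in> V1" "c \<in> V2" using V12 by auto
  have fin: "finite V1" "finite V2" using G1 G2 unfolding graph_def by auto
  define P where "P = enn2real (p2 c)"
  have P1: "p2 c = ennreal P" using p2(2) by (simp add: P_def)
  have P0: "0 \<le> P" unfolding P_def by simp
  have "1 \<le> p2 c" using p2(1) cV by blast
  then have "ennreal 1 \<le> ennreal P" using P1 by simp
  then have P: "P \<ge> 1" using ennreal_le_iff[OF P0, of 1] by blast
  define r where "r = P + 1"
  define a where "a = P * (P + 1)"
  have r: "r > 1" "r > P" using P by (auto simp: r_def)
  have a: "a > P" "a \<ge> 1" using P by (auto simp: a_def algebra_simps) (smt (verit) mult_le_cancel_left1)
  have par: "1 / P = 1 / a + 1 / r"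
  proof -
    have pos: "P > 0" "P + 1 > 0" "P * (P + 1) > 0" using P by auto
    have "1 / a + 1 / r = 1 / (P * (P + 1)) + P / (P * (P + 1))"
      using pos by (simp add: a_def r_def)
    also have "\<dots> = (1 + P) / (P * (P + 1))" by (simp add: add_divide_distrib)
    also have "\<dots> = 1 / P" using pos by (simp add: field_simps)
    finally show ?thesis by simp
  qed
  from U[unfolded univ_Lp_improving_op_def, rule_format, OF r(1)]
  obtain q :: "nat \<Rightarrow> ennreal" and C1 :: real where
    q: "\<forall>v\<in>V1 - {c}. 1 \<le> q v" "(\<Sum>v\<in>V1 - {c}. 1 / q v) > 1 / ennreal r" and
    C1: "\<forall>g. admissible_fns (V1 - {c}) g \<longrightarrow>
       Lpnorm (ennreal r) (Top K V1 E1 c g) \<le> ennreal C1 * (\<Prod>v\<in>V1 - {c}. Lpnorm (q v) (g v))"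
    by blast
  define s where "s v = (if v \<in> V2 - {c} then p2 v else if v = c then ennreal a else q v)" for v
  define C where "C = max C2 0 * max C1 0"
  have Vsplit: "V1 \<union> V2 = (V2 - {c}) \<union> insert c (V1 - {c})" using cV by auto
  have Vdisj: "(V2 - {c}) \<inter> insert c (V1 - {c}) = {}" using V12 by auto
  have finD: "finite (V2 - {c})" "finite (V1 - {c})" using fin by auto
  show ?thesis unfolding Lp_improving_def
  proof (intro exI conjI ballI allI impI)
    fix v assume "v \<in> V1 \<union> V2"
    then show "1 \<le> s v" using p2(1) q(1) a V12 by (auto simp: s_def)
  next
    define A2 where "A2 = (\<Sum>v\<in>V2 - {c}. 1 / p2 v)"
    define B where "B = (\<Sum>v\<in>V1 - {c}. 1 / q v)"
    have ia: "1 / ennreal a = ennreal (1/a)" using divide_ennreal[of 1 a] a by simp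
    have ir: "1 / ennreal r = ennreal (1/r)" using divide_ennreal[of 1 r] r by simp
    have iP: "1 / ennreal P = ennreal (1/P)" using divide_ennreal[of 1 P] P by simp
    have sum_s: "(\<Sum>v\<in>V1 \<union> V2. 1 / s v) = A2 + (ennreal (1/a) + B)"
    proof -
      have "(\<Sum>v\<in>V1 \<union> V2. 1 / s v) = (\<Sum>v\<in>V2 - {c}. 1 / s v) + (\<Sum>v\<in>insert c (V1 - {c}). 1 / s v)"
        unfolding Vsplit by (rule sum.union_disjoint) (use finD Vdisj in auto)
      also have "(\<Sum>v\<in>insert c (V1 - {c}). 1 / s v) = 1 / s c + (\<Sum>v\<in>V1 - {c}. 1 / s v)"
        by (rule sum.insert) (use finD in auto)
      also have "(\<Sum>v\<in>V2 - {c}. 1 / s v) = A2" unfolding A2_def by (rule sum.cong) (auto simp: s_def)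
      also have "(\<Sum>v\<in>V1 - {c}. 1 / s v) = B" unfolding B_def
        by (rule sum.cong) (use V12 in \<open>auto simp: s_def\<close>)
      also have "1 / s c = ennreal (1/a)" using ia by (simp add: s_def)
      finally show ?thesis .
    qed
    have sum2: "(\<Sum>v\<in>V2. 1 / p2 v) = ennreal (1/P) + A2"
      unfolding A2_def using sum.remove[OF fin(2) cV(2), of "\<lambda>v. 1 / p2 v"] P1 iP by simp
    have A2fin: "A2 \<noteq> \<top>"
    proof -
      have "1 / p2 v \<noteq> \<top>" if "v \<in> V2 - {c}" for v
      proof -
        have "p2 v \<noteq> 0" using p2(1) that by (metis DiffD1 not_one_le_zero)
        then show ?thesis by (simp add: ennreal_divide_eq_top_iff)
      qed
      then show ?thesis unfolding A2_def using finD by simp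
    qed
    have "ennreal (1/a) + ennreal (1/r) = ennreal (1/P)"
      using a r P par by (simp flip: ennreal_plus)
    then have "1 \<le> (A2 + ennreal (1/a)) + ennreal (1/r)"
      using p2(3) sum2 by (simp add: ac_simps)
    also have "\<dots> < (A2 + ennreal (1/a)) + B"
      using q(2) A2fin ir unfolding B_def by (subst ennreal_add_left_cancel_less) simp
    finally show "1 < (\<Sum>v\<in>V1 \<union> V2. 1 / s v)" unfolding sum_s by (simp add: ac_simps)
  next
    fix f :: "nat \<Rightarrow> 'a \<Rightarrow> ennreal"
    assume adm: "admissible_fns (V1 \<union> V2) f"
    define T where "T = Top K V1 E1 c f"
    define g where "g = f(c := \<lambda>y. f c y * T y)"
    have adm1: "admissible_fns (V1 - {c}) f" using adm unfolding admissible_fns_def by auto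
    have Tm: "T \<in> borel_measurable borel" unfolding T_def by (rule Top_meas[OF Km G1 adm1])
    have fcm: "f c \<in> borel_measurable borel" using adm cV adm_meas by blast
    have adm2: "admissible_fns V2 g"
      unfolding admissible_fns_def
    proof
      fix v assume v: "v \<in> V2"
      show "g v \<in> borel_measurable lborel"
      proof (cases "v = c")
        case True
        then show ?thesis using borel_measurable_times_ennreal[OF fcm Tm] by (simp add: g_def)
      next
        case False
        then show ?thesis using adm v unfolding admissible_fns_def by (simp add: g_def)
      qed
    qed
    define Q1 where "Q1 = (\<Prod>v\<in>V1 - {c}. Lpnorm (q v) (f v))"
    define Q2 where "Q2 = (\<Prod>v\<in>V2 - {c}. Lpnorm (p2 v) (f v))"
    define La where "La = Lpnorm (ennreal a) (f c)"
    have "Lambda K (V1 \<union> V2) (E1 \<union> E2) f = Lambda K V2 E2 g"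
      unfolding g_def T_def by (rule Lambda_split[OF Km G1 G2 V12 adm])
    also have "\<dots> \<le> ennreal C2 * (\<Prod>v\<in>V2. Lpnorm (p2 v) (g v))"
      using C2 adm2 by blast
    also have "(\<Prod>v\<in>V2. Lpnorm (p2 v) (g v)) = Lpnorm (p2 c) (g c) * (\<Prod>v\<in>V2 - {c}. Lpnorm (p2 v) (g v))"
      by (rule prod.remove) (use fin cV in auto)
    also have "(\<Prod>v\<in>V2 - {c}. Lpnorm (p2 v) (g v)) = Q2"
      unfolding Q2_def by (rule prod.cong) (auto simp: g_def)
    also have "Lpnorm (p2 c) (g c) \<le> La * (ennreal C1 * Q1)"
    proof -
      have "Lpnorm (p2 c) (g c) = Lpnorm (ennreal P) (\<lambda>y. f c y * T y)"
        by (simp add: g_def P1)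
      also have "\<dots> \<le> Lpnorm (ennreal a) (f c) * Lpnorm (ennreal r) T"
        by (rule Lpnorm_holder) (use fcm Tm P a r par in auto)
      also have "Lpnorm (ennreal r) T \<le> ennreal C1 * Q1"
        using C1 adm1 unfolding T_def Q1_def by blast
      finally show ?thesis unfolding La_def by (simp add: mult_left_mono)
    qed
    then have "ennreal C2 * (Lpnorm (p2 c) (g c) * Q2) \<le> ennreal C2 * (La * (ennreal C1 * Q1) * Q2)"
      by (intro mult_left_mono mult_right_mono) auto
    also have "\<dots> \<le> ennreal (max C2 0) * (La * (ennreal (max C1 0) * Q1) * Q2)"
      by (intro mult_mono mult_left_mono mult_right_mono ennreal_leI) auto
    also have "\<dots> = ennreal C * (Q2 * (La * Q1))"
      unfolding C_def by (simp add: ennreal_mult ac_simps)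
    also have "Q2 * (La * Q1) = (\<Prod>v\<in>V1 \<union> V2. Lpnorm (s v) (f v))"
    proof -
      have "(\<Prod>v\<in>V1 \<union> V2. Lpnorm (s v) (f v)) =
          (\<Prod>v\<in>V2 - {c}. Lpnorm (s v) (f v)) * (\<Prod>v\<in>insert c (V1 - {c}). Lpnorm (s v) (f v))"
        unfolding Vsplit by (rule prod.union_disjoint) (use finD Vdisj in auto)
      also have "(\<Prod>v\<in>insert c (V1 - {c}). Lpnorm (s v) (f v)) = Lpnorm (s c) (f c) * (\<Prod>v\<in>V1 - {c}. Lpnorm (s v) (f v))"
        by (rule prod.insert) (use finD in auto)
      also have "(\<Prod>v\<in>V2 - {c}. Lpnorm (s v) (f v)) = Q2"
        unfolding Q2_def by (rule prod.cong) (auto simp: s_def)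
      also have "(\<Prod>v\<in>V1 - {c}. Lpnorm (s v) (f v)) = Q1" unfolding Q1_def
        by (rule prod.cong) (use V12 in \<open>auto simp: s_def\<close>)
      also have "Lpnorm (s c) (f c) = La" by (simp add: s_def La_def)
      finally show ?thesis ..
    qed
    finally show "Lambda K (V1 \<union> V2) (E1 \<union> E2) f \<le> ennreal C * (\<Prod>v\<in>V1 \<union> V2. Lpnorm (s v) (f v))" .
  qed
qed

theorem theorem1p3:
  fixes K :: "'a::euclidean_space \<Rightarrow> 'a \<Rightarrow> real"
    and n1 n2 :: nat and E1 E2 :: "nat set set"
  assumes K_nonneg: "\<And>x y. K x y \<ge> 0"
    and K_loc: "locally_integrable_kernel K"
    and n1: "n1 \<ge> 1" and n2: "n2 \<ge> 1"
    and G1: "connected_graph {1..n1} E1"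
    and G2: "connected_graph {n1..n1 + n2 - 1} E2"
    and hyp: "(univ_Lp_improving K {1..n1} E1 \<and> nontrivial_estimate_at K {n1..n1 + n2 - 1} E2 n1)
            \<or> (univ_Lp_improving K {n1..n1 + n2 - 1} E2 \<and> nontrivial_estimate_at K {1..n1} E1 n1)"
  shows "Lp_improving K {1..n1 + n2 - 1} (E1 \<union> E2)"
proof -
  have Km: "(\<lambda>z. K (fst z) (snd z)) \<in> borel_measurable (borel \<Otimes>\<^sub>M borel)"
    by (rule K_meas[OF K_loc])
  have g1: "graph {1..n1} E1" using G1 unfolding connected_graph_def by auto
  have g2: "graph {n1..n1 + n2 - 1} E2" using G2 unfolding connected_graph_def by auto
  have I: "{1..n1} \<inter> {n1..n1 + n2 - 1} = {n1}" using n1 n2 by auto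
  have U: "{1..n1} \<union> {n1..n1 + n2 - 1} = {1..n1 + n2 - 1}" using n1 n2 by auto
  have m1: "n1 \<in> {1..n1}" "n1 \<in> {n1..n1 + n2 - 1}" using n1 n2 by auto
  from hyp show ?thesis
  proof
    assume h: "univ_Lp_improving K {1..n1} E1 \<and> nontrivial_estimate_at K {n1..n1 + n2 - 1} E2 n1"
    then have "univ_Lp_improving_op K {1..n1} E1 n1" using m1 unfolding univ_Lp_improving_def by blast
    from main_lemma[OF Km g1 g2 I this] h show ?thesis unfolding U by blast
  next
    assume h: "univ_Lp_improving K {n1..n1 + n2 - 1} E2 \<and> nontrivial_estimate_at K {1..n1} E1 n1"
    then have "univ_Lp_improving_op K {n1..n1 + n2 - 1} E2 n1" using m1 unfolding univ_Lp_improving_def by blast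
    from main_lemma[OF Km g2 g1 _ this] h I show ?thesis
      by (metis Int_commute U Un_commute)
  qed
qed

end
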